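(* Consider the large system limit $B\to\infty$ with a fixed content catalogue $\mathcal{C}$ and fixed normalized popularities $\{\hat{\nu}_c\}$ (so that $\nu_c=\hat{\nu}_c\rho BU$). Then the ``hot-warm-cold'' placement strategy achieves an asymptotic absorbed traffic load (load served either by local service or by download from another box, normalized by $BU$) equal to $$\tilde{\rho} = \sum_{c=1}^{c^*}\rho_c + (\rho_{c^*+1}+1)\left(1 - \sum_{c=M}^{c^*} \frac{\rho_c}{1+\rho_c}\right),$$ which is an upper bound on the absorbed load achievable by any placement; hence the hot-warm-cold strategy is asymptotically optimal in this sense.
   Context: Pure Peer-to-Peer Network setting: there are $B$ boxes, each caching up to $M$ contents and able to serve up to $U$ concurrent requests (uplink bandwidth $U$ times the streaming rate, normalized to 1); all videos have duration 1. Requests for content $c$ arrive as a Poisson process of rate $\nu_c$, each originating from a box chosen uniformly at random; if the requesting box already caches $c$, the request receives ``local service'' consuming no bandwidth, otherwise it must be served by another box holding $c$, and it is accepted if the resulting vector of ongoing downloads can be matched to boxes holding the contents within their bandwidth (repacking allowed), otherwise rejected (loss network). The system load is $\rho=\sum_c\nu_c/(BU)$ and $\rho_c\triangleq\rho\hat{\nu}_c$, with contents indexed in descending order of popularity. Let $\tilde{m}_c$ be the fraction of boxes caching $c$ and $\lambda_c$ the fraction of system bandwidth used to serve $c$ (with $\lambda_c\le\tilde m_c$, $\sum_c\lambda_c\le1$, $\sum_c\tilde m_c=M$); the absorbed load is upper bounded by $\sum_c \rho_c\tilde m_c+[\rho_c(1-\tilde m_c)]\wedge\lambda_c$, and the maximum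 of this bound over all such $(\tilde m,\lambda)$ equals $\tilde\rho$ above. The ``hot-warm-cold'' placement: every box stores the $M-1$ most popular contents (``hot''); in its remaining slot, a fraction $\tilde m_c=\rho_c/(1+\rho_c)$ of boxes store content $c$ for $M\le c\le c^*$, and a fraction $\tilde m_{c^*+1}=1-\sum_{c=M}^{c^*}\rho_c/(1+\rho_c)$ store content $c^*+1$ (``warm''), where $c^*$ satisfies $\sum_{c=M}^{c^*}\rho_c/(1+\rho_c)\le1<\sum_{c=M}^{c^*+1}\rho_c/(1+\rho_c)$; all remaining contents (``cold'') are not cached. *)

theory Defs
  imports "HOL-Analysis.Analysis"
begin

text \<open>Contents are indexed 1..N in descending order of popularity; boxes are 0..B-1.
A placement for B boxes is a map P from boxes to the set of contents they cache.\<close>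

definition placement :: "nat \<Rightarrow> nat \<Rightarrow> nat \<Rightarrow> (nat \<Rightarrow> nat set) \<Rightarrow> bool" where
  "placement N M B P \<longleftrightarrow> (\<forall>b<B. P b \<subseteq> {1..N} \<and> card (P b) \<le> M)"

definition frac :: "nat \<Rightarrow> (nat \<Rightarrow> nat set) \<Rightarrow> nat \<Rightarrow> real" where
  "frac B P c = real (card {b \<in> {..<B}. c \<in> P b}) / real B"

text \<open>A vector n of ongoing (non-local) downloads is feasible if it can be matched
to boxes holding the contents, each box serving at most U downloads (repacking allowed).\<close>
definition feasible :: "nat \<Rightarrow> nat \<Rightarrow> nat \<Rightarrow> (nat \<Rightarrow> nat set) \<Rightarrow> (nat \<Rightarrow> nat) \<Rightarrow> bool" where
  "feasible N B U P n \<longleftrightarrow>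
     (\<forall>c. c \<notin> {1..N} \<longrightarrow> n c = 0) \<and>
     (\<exists>x :: nat \<Rightarrow> nat \<Rightarrow> nat.
        (\<forall>c b. 0 < x c b \<longrightarrow> c \<in> {1..N} \<and> b < B \<and> c \<in> P b) \<and>
        (\<forall>c\<in>{1..N}. (\<Sum>b<B. x c b) = n c) \<and>
        (\<forall>b<B. (\<Sum>c\<in>{1..N}. x c b) \<le> U))"

definition states :: "nat \<Rightarrow> nat \<Rightarrow> nat \<Rightarrow> (nat \<Rightarrow> nat set) \<Rightarrow> (nat \<Rightarrow> nat) set" where
  "states N B U P = {n. feasible N B U P n}"

text \<open>Arrival rate of requests for c: nu_c = nuhat_c * rho * B * U.
Non-local requests for c arrive at rate nu_c (1 - frac c).\<close>
definition offered :: "(nat \<Rightarrow> real) \<Rightarrow> real \<Rightarrow> nat \<Rightarrow> nat \<Rightarrow> (nat \<Rightarrow> nat set) \<Rightarrow> nat \<Rightarrow> real" where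
  "offered nuhat rho U B P c = nuhat c * rho * real B * real U * (1 - frac B P c)"

text \<open>Stationary distribution of the loss network: product form (truncated Poisson)
on the coordinate-convex set of feasible states (insensitive to the duration distribution).\<close>
definition weight :: "nat \<Rightarrow> (nat \<Rightarrow> real) \<Rightarrow> real \<Rightarrow> nat \<Rightarrow> nat \<Rightarrow> (nat \<Rightarrow> nat set) \<Rightarrow> (nat \<Rightarrow> nat) \<Rightarrow> real" where
  "weight N nuhat rho U B P n = (\<Prod>c\<in>{1..N}. offered nuhat rho U B P c ^ n c / fact (n c))"

definition stat_prob :: "nat \<Rightarrow> (nat \<Rightarrow> real) \<Rightarrow> real \<Rightarrow> nat \<Rightarrow> nat \<Rightarrow> (nat \<Rightarrow> nat set) \<Rightarrow> (nat \<Rightarrow> nat) \<Rightarrow> real" where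
  "stat_prob N nuhat rho U B P n =
     weight N nuhat rho U B P n / (\<Sum>m\<in>states N B U P. weight N nuhat rho U B P m)"

text \<open>Probability that an arriving non-local request for c is accepted (PASTA).\<close>
definition accept_prob :: "nat \<Rightarrow> (nat \<Rightarrow> real) \<Rightarrow> real \<Rightarrow> nat \<Rightarrow> nat \<Rightarrow> (nat \<Rightarrow> nat set) \<Rightarrow> nat \<Rightarrow> real" where
  "accept_prob N nuhat rho U B P c =
     (\<Sum>n\<in>{n \<in> states N B U P. n(c := Suc (n c)) \<in> states N B U P}. stat_prob N nuhat rho U B P n)"

definition absorbed :: "nat \<Rightarrow> (nat \<Rightarrow> real) \<Rightarrow> real \<Rightarrow> nat \<Rightarrow> nat \<Rightarrow> (nat \<Rightarrow> nat set) \<Rightarrow> real" where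
  "absorbed N nuhat rho U B P =
     (\<Sum>c\<in>{1..N}. nuhat c * rho * real B * real U * frac B P c
                 + offered nuhat rho U B P c * accept_prob N nuhat rho U B P c) / (real B * real U)"

definition hwc_frac :: "nat \<Rightarrow> (nat \<Rightarrow> real) \<Rightarrow> real \<Rightarrow> nat \<Rightarrow> nat \<Rightarrow> real" where
  "hwc_frac M nuhat rho cstar c =
     (if c \<le> cstar then rho * nuhat c / (1 + rho * nuhat c)
      else 1 - (\<Sum>d\<in>{M..cstar}. rho * nuhat d / (1 + rho * nuhat d)))"

definition hwc_seq :: "nat \<Rightarrow> nat \<Rightarrow> (nat \<Rightarrow> real) \<Rightarrow> real \<Rightarrow> nat \<Rightarrow> (nat \<Rightarrow> nat \<Rightarrow> nat set) \<Rightarrow> bool" where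
  "hwc_seq N M nuhat rho cstar P \<longleftrightarrow>
     (\<forall>B. \<forall>b<B. \<exists>w\<in>{M..cstar+1}. P B b = {1..M-1} \<union> {w}) \<and>
     (\<forall>c\<in>{M..cstar+1}. (\<lambda>B. frac B (P B) c) \<longlonglongrightarrow> hwc_frac M nuhat rho cstar c)"

definition rho_tilde :: "nat \<Rightarrow> (nat \<Rightarrow> real) \<Rightarrow> real \<Rightarrow> nat \<Rightarrow> real" where
  "rho_tilde M nuhat rho cstar =
     (\<Sum>c\<in>{1..cstar}. rho * nuhat c)
     + (rho * nuhat (cstar+1) + 1) * (1 - (\<Sum>c\<in>{M..cstar}. rho * nuhat c / (1 + rho * nuhat c)))"

end

theory Submission
  imports Defs
begin

lemma feasible_zero_out:
  assumes "feasible N B U P n" "c \<notin> {1..N}" shows "n c = 0"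
  using assms unfolding feasible_def by blast

lemma feasible_le_card:
  assumes "feasible N B U P n" "c \<in> {1..N}"
  shows "n c \<le> U * card {b \<in> {..<B}. c \<in> P b}"
proof -
  obtain x where x1: "\<forall>c b. 0 < x c b \<longrightarrow> c \<in> {1..N} \<and> b < B \<and> c \<in> P b"
    and x2: "\<forall>c\<in>{1..N}. (\<Sum>b<B. x c b) = n c"
    and x3: "\<forall>b<B. (\<Sum>c\<in>{1..N}. x c b) \<le> U"
    using assms(1) unfolding feasible_def by blast
  let ?K = "{b \<in> {..<B}. c \<in> P b}"
  have "n c = (\<Sum>b<B. x c b)" using x2 assms(2) by simp
  also have "\<dots> = (\<Sum>b\<in>?K. x c b)"
    by (rule sum.mono_neutral_right) (use x1 in auto)
  also have "\<dots> \<le> (\<Sum>b\<in>?K. U)"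
  proof (rule sum_mono)
    fix b assume "b \<in> ?K"
    hence "x c b \<le> (\<Sum>c\<in>{1..N}. x c b)" using assms(2) by (intro member_le_sum) auto
    thus "x c b \<le> U" using x3 \<open>b \<in> ?K\<close> by fastforce
  qed
  finally show ?thesis by (simp add: mult.commute)
qed

lemma feasible_sum_le:
  assumes "feasible N B U P n"
  shows "(\<Sum>c\<in>{1..N}. n c) \<le> B * U"
proof -
  obtain x where x2: "\<forall>c\<in>{1..N}. (\<Sum>b<B. x c b) = n c"
    and x3: "\<forall>b<B. (\<Sum>c\<in>{1..N}. x c b) \<le> U"
    using assms(1) unfolding feasible_def by blast
  have "(\<Sum>c\<in>{1..N}. n c) = (\<Sum>c\<in>{1..N}. \<Sum>b<B. x c b)" using x2 by simp
  also have "\<dots> = (\<Sum>b<B. \<Sum>c\<in>{1..N}. x c b)" by (rule sum.swap)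
  also have "\<dots> \<le> (\<Sum>b<B. U)" by (rule sum_mono) (use x3 in auto)
  finally show ?thesis by simp
qed

lemma card_le_B: "card {b \<in> {..<B}. c \<in> P b} \<le> B"
  by (metis (no_types, lifting) card_lessThan card_mono finite_lessThan mem_Collect_eq subsetI)

lemma finite_states: "finite (states N B U P)"
proof -
  have "states N B U P \<subseteq> {f. \<forall>x. (x \<in> {1..N} \<longrightarrow> f x \<in> {..U*B}) \<and> (x \<notin> {1..N} \<longrightarrow> f x = 0)}"
  proof (intro subsetI CollectI allI conjI impI)
    fix n x assume "n \<in> states N B U P" "x \<in> {1..N}"
    hence "n x \<le> U * card {b \<in> {..<B}. x \<in> P b}" unfolding states_def
      using feasible_le_card by blast
    also have "\<dots> \<le> U * B" using card_le_B[of B x P] by (rule mult_le_mono2)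
    finally show "n x \<in> {..U*B}" by simp
  next
    fix n x assume "n \<in> states N B U P" "x \<notin> {1..N}"
    thus "n x = 0" unfolding states_def using feasible_zero_out by blast
  qed
  thus ?thesis by (rule finite_subset) (rule finite_set_of_finite_funs; simp)
qed

lemma zero_state: "(\<lambda>_. 0) \<in> states N B U P"
  unfolding states_def feasible_def by (rule CollectI, rule conjI, simp, rule exI[of _ "\<lambda>_ _. 0"]) simp

lemma coord_convex:
  assumes "n \<in> states N B U P" "0 < n c"
  shows "n(c := n c - 1) \<in> states N B U P"
proof -
  have f: "feasible N B U P n" using assms unfolding states_def by simp
  obtain x where x1: "\<forall>c b. 0 < x c b \<longrightarrow> c \<in> {1..N} \<and> b < B \<and> c \<in> P b"
    and x2: "\<forall>c\<in>{1..N}. (\<Sum>b<B. x c b) = n c"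
    and x3: "\<forall>b<B. (\<Sum>c\<in>{1..N}. x c b) \<le> U"
    and x0: "\<forall>c. c \<notin> {1..N} \<longrightarrow> n c = 0"
    using f unfolding feasible_def by blast
  have cN: "c \<in> {1..N}" using x0 assms(2) by (metis less_irrefl)
  have "(\<Sum>b<B. x c b) > 0" using x2 cN assms(2) by simp
  then obtain b where b: "b < B" "x c b > 0"
    by (metis gr_zeroI lessThan_iff sum.neutral)
  define x' where "x' = x(c := (x c)(b := x c b - 1))"
  have le: "x' d e \<le> x d e" for d e unfolding x'_def by auto
  have r: "(\<Sum>e<B. x' c e) = n c - 1"
  proof -
    have "(\<Sum>e<B. x c e) = x c b + (\<Sum>e\<in>{..<B}-{b}. x c e)"
      using b by (simp add: sum.remove)
    moreover have "(\<Sum>e<B. x' c e) = x' c b + (\<Sum>e\<in>{..<B}-{b}. x' c e)"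
      using b by (simp add: sum.remove)
    moreover have "(\<Sum>e\<in>{..<B}-{b}. x' c e) = (\<Sum>e\<in>{..<B}-{b}. x c e)"
      by (rule sum.cong) (auto simp: x'_def)
    ultimately show ?thesis using x2 cN b unfolding x'_def by simp
  qed
  show ?thesis unfolding states_def feasible_def
  proof (intro CollectI conjI exI[of _ x'])
    show "\<forall>d. d \<notin> {1..N} \<longrightarrow> (n(c := n c - 1)) d = 0" using x0 cN by auto
    show "\<forall>d e. 0 < x' d e \<longrightarrow> d \<in> {1..N} \<and> e < B \<and> d \<in> P e"
      using x1 le by (meson less_le_trans)
    show "\<forall>d\<in>{1..N}. (\<Sum>e<B. x' d e) = (n(c := n c - 1)) d"
      using x2 r by (auto simp: x'_def)
    show "\<forall>e<B. (\<Sum>d\<in>{1..N}. x' d e) \<le> U"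
      using x3 by (meson le order_trans sum_mono)
  qed
qed


lemma prod_split0:
  fixes c N :: nat
  assumes "c \<in> {1..N}" "g c 0 = 1"
  shows "(\<Prod>d\<in>{1..N}. g d (n d)) = g c (n c) * (\<Prod>d\<in>{1..N}. g d ((n(c:=0)) d))"
proof -
  have "(\<Prod>d\<in>{1..N}. g d (n d)) = g c (n c) * (\<Prod>d\<in>{1..N}-{c}. g d (n d))"
    using prod.remove[OF finite_atLeastAtMost assms(1)] by simp
  moreover have "(\<Prod>d\<in>{1..N}. g d ((n(c:=0)) d)) = g c 0 * (\<Prod>d\<in>{1..N}-{c}. g d ((n(c:=0)) d))"
    using assms(1) by (subst prod.remove[of _ c]) auto
  moreover have "(\<Prod>d\<in>{1..N}-{c}. g d ((n(c:=0)) d)) = (\<Prod>d\<in>{1..N}-{c}. g d (n d))"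
    by (rule prod.cong) auto
  ultimately show ?thesis using assms(2) by simp
qed

lemma weight_split:
  assumes "c \<in> {1..N}"
  shows "weight N nuhat rho U B P n =
     offered nuhat rho U B P c ^ n c / fact (n c) * weight N nuhat rho U B P (n(c:=0))"
  unfolding weight_def
  by (rule prod_split0[OF assms, where g = "\<lambda>d k. offered nuhat rho U B P d ^ k / fact k"]) simp

lemma weight_zero: "weight N nuhat rho U B P (\<lambda>_. 0) = 1"
  unfolding weight_def by simp

lemma weight_nonneg:
  assumes "\<forall>c\<in>{1..N}. offered nuhat rho U B P c \<ge> 0"
  shows "weight N nuhat rho U B P n \<ge> 0"
  unfolding weight_def using assms by (intro prod_nonneg) auto

lemma sum_weight_pos:
  assumes "\<forall>c\<in>{1..N}. offered nuhat rho U B P c \<ge> 0"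
  shows "(\<Sum>m\<in>states N B U P. weight N nuhat rho U B P m) > 0"
proof -
  have "(\<Sum>m\<in>states N B U P. weight N nuhat rho U B P m) \<ge> weight N nuhat rho U B P (\<lambda>_. 0)"
    using weight_nonneg[OF assms] finite_states zero_state by (intro member_le_sum) auto
  thus ?thesis using weight_zero by simp
qed

lemma little:
  fixes N B U :: nat and P :: "nat \<Rightarrow> nat set" and nuhat :: "nat \<Rightarrow> real" and rho :: real
  assumes c: "c \<in> {1..N}"
  defines "S \<equiv> states N B U P"
  defines "w \<equiv> weight N nuhat rho U B P"
  defines "a \<equiv> offered nuhat rho U B P c"
  shows "a * (\<Sum>n\<in>{n \<in> S. n(c := Suc (n c)) \<in> S}. w n) = (\<Sum>n\<in>S. w n * real (n c))"
proof -
  let ?A = "{n \<in> S. n(c := Suc (n c)) \<in> S}"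
  let ?S1 = "{m \<in> S. 0 < m c}"
  have fS: "finite S" unfolding S_def by (rule finite_states)
  have "(\<Sum>n\<in>S. w n * real (n c)) = (\<Sum>m\<in>?S1. w m * real (m c))"
    by (rule sum.mono_neutral_right) (use fS in auto)
  also have "\<dots> = (\<Sum>n\<in>?A. w (n(c := Suc (n c))) * real (Suc (n c)))"
  proof -
    have bij: "bij_betw (\<lambda>n. n(c := Suc (n c))) ?A ?S1"
    proof (rule bij_betw_byWitness[where f' = "\<lambda>m. m(c := m c - 1)"])
      show "\<forall>a\<in>?A. (a(c := Suc (a c)))(c := (a(c := Suc (a c))) c - 1) = a" by auto
      show "\<forall>m\<in>?S1. (m(c := m c - 1))(c := Suc ((m(c := m c - 1)) c)) = m" by auto
      show "(\<lambda>n. n(c := Suc (n c))) ` ?A \<subseteq> ?S1" by auto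
      show "(\<lambda>m. m(c := m c - 1)) ` ?S1 \<subseteq> ?A"
      proof
        fix n assume "n \<in> (\<lambda>m. m(c := m c - 1)) ` ?S1"
        then obtain m where m: "m \<in> S" "0 < m c" "n = m(c := m c - 1)" by auto
        have "n \<in> S" using coord_convex m unfolding S_def by blast
        moreover have "n(c := Suc (n c)) = m" using m by auto
        ultimately show "n \<in> ?A" using m by auto
      qed
    qed
    have "(\<Sum>n\<in>?A. w (n(c := Suc (n c))) * real ((n(c := Suc (n c))) c)) = (\<Sum>m\<in>?S1. w m * real (m c))"
      by (rule sum.reindex_bij_betw[OF bij])
    thus ?thesis by simp
  qed
  also have "\<dots> = (\<Sum>n\<in>?A. a * w n)"
  proof (rule sum.cong[OF refl])
    fix n
    have "w (n(c := Suc (n c))) = a ^ Suc (n c) / fact (Suc (n c)) * w (n(c:=0))"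
      using weight_split[OF c, of nuhat rho U B P "n(c := Suc (n c))"] unfolding w_def a_def by simp
    moreover have "w n = a ^ n c / fact (n c) * w (n(c:=0))"
      using weight_split[OF c, of nuhat rho U B P n] unfolding w_def a_def by simp
    ultimately have e: "fact (n c) * (real (Suc (n c)) * w (n(c := Suc (n c)))) = fact (n c) * (a * w n)"
      by (simp add: field_simps del: of_nat_Suc)
    have "(fact (n c)::real) \<noteq> 0" by simp
    with e show "w (n(c := Suc (n c))) * real (Suc (n c)) = a * w n"
      by (simp add: mult.commute del: of_nat_Suc)
  qed
  finally show ?thesis by (simp add: sum_distrib_left)
qed


lemma lp_hot:
  fixes \<rho> f t \<alpha> r :: real
  assumes "0 \<le> f" "f \<le> 1" "0 \<le> t" "t \<le> \<rho> * (1 - f)" "\<alpha> \<ge> r"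
    "\<alpha> * (1 + \<rho>) \<le> \<rho> * (1 + r)"
  shows "\<rho> * f + t \<le> \<alpha> * f + (1 + r - \<alpha>) * t + (\<rho> - \<alpha>)"
proof -
  have "(\<alpha> - r) * t \<le> (\<alpha> - r) * (\<rho> * (1 - f))" using assms by (intro mult_left_mono) auto
  moreover have "(\<rho> * (1 + r) - \<alpha> * (1 + \<rho>)) * (1 - f) \<ge> 0" using assms by auto
  ultimately show ?thesis by (simp add: algebra_simps)
qed

lemma lp_warm:
  fixes \<rho> f t \<alpha> r :: real
  assumes "0 \<le> f" "f \<le> 1" "0 \<le> t" "t \<le> \<rho> * (1 - f)" "t \<le> f" "\<alpha> \<ge> r" "\<rho> \<ge> r" "\<rho> \<ge> 0"
    "\<alpha> * (1 + \<rho>) \<ge> \<rho> * (1 + r)"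
  shows "\<rho> * f + t \<le> \<alpha> * f + (1 + r - \<alpha>) * t + (\<rho> - (1 + r) * (\<rho> / (1 + \<rho>)))"
proof -
  define m where "m = \<rho> / (1 + \<rho>)"
  have m1: "m * (1 + \<rho>) = \<rho>" unfolding m_def using assms by simp
  show ?thesis
  proof (cases "f \<le> m")
    case True
    have "(\<alpha> - r) * t \<le> (\<alpha> - r) * f" using assms by (intro mult_left_mono) auto
    moreover have "(\<rho> - r) * f \<le> (\<rho> - r) * m" using True assms by (intro mult_left_mono) auto
    ultimately show ?thesis using m1 unfolding m_def[symmetric] by (simp add: algebra_simps)
  next
    case False
    have "(\<alpha> - r) * t \<le> (\<alpha> - r) * (\<rho> * (1 - f))" using assms by (intro mult_left_mono) auto
    moreover have "(\<alpha> * (1 + \<rho>) - \<rho> * (1 + r)) * (f - m) \<ge> 0" using assms False by auto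
    moreover have "\<alpha> * (m * (1 + \<rho>)) = \<alpha> * \<rho>" "r * (m * (1 + \<rho>)) = r * \<rho>" using m1 by auto
    ultimately show ?thesis using m1 unfolding m_def[symmetric] by (simp add: algebra_simps)
  qed
qed

lemma lp_cold:
  fixes \<rho> f t \<alpha> r :: real
  assumes "0 \<le> f" "t \<le> f" "\<alpha> \<ge> r" "\<rho> \<le> r"
  shows "\<rho> * f + t \<le> \<alpha> * f + (1 + r - \<alpha>) * t + 0"
proof -
  have "(\<alpha> - r) * t \<le> (\<alpha> - r) * f" using assms by (intro mult_left_mono) auto
  moreover have "(\<rho> - r) * f \<le> 0" using assms by (simp add: mult_nonpos_nonneg)
  ultimately show ?thesis by (simp add: algebra_simps)
qed


lemma split3:
  fixes M cstar N :: nat and h :: "nat \<Rightarrow> real"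
  assumes "1 \<le> M" "M \<le> cstar" "cstar + 1 \<le> N"
  shows "(\<Sum>c\<in>{1..N}. h c) = (\<Sum>c\<in>{1..<M}. h c) + (\<Sum>c\<in>{M..cstar}. h c) + (\<Sum>c\<in>{Suc cstar..N}. h c)"
proof -
  have "{1..N} = {1..<M} \<union> {M..cstar} \<union> {Suc cstar..N}" using assms by auto
  moreover have "{1..<M} \<inter> {M..cstar} = {}" "({1..<M} \<union> {M..cstar}) \<inter> {Suc cstar..N} = {}" using assms by auto
  ultimately show ?thesis by (simp add: sum.union_disjoint)
qed

lemma lp_bound:
  fixes M cstar N :: nat and \<rho> f t :: "nat \<Rightarrow> real"
  assumes M1: "1 \<le> M" and Mc: "M \<le> cstar" and cN: "cstar + 1 \<le> N"
    and pos: "\<forall>c\<in>{1..N}. \<rho> c \<ge> 0"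
    and mono: "\<forall>c c'. 1 \<le> c \<and> c \<le> c' \<and> c' \<le> N \<longrightarrow> \<rho> c' \<le> \<rho> c"
    and ft: "\<forall>c\<in>{1..N}. 0 \<le> f c \<and> f c \<le> 1 \<and> 0 \<le> t c \<and> t c \<le> f c \<and> t c \<le> \<rho> c * (1 - f c)"
    and sf: "(\<Sum>c\<in>{1..N}. f c) \<le> M" and st: "(\<Sum>c\<in>{1..N}. t c) \<le> 1"
  shows "(\<Sum>c\<in>{1..N}. \<rho> c * f c + t c) \<le>
    (\<Sum>c\<in>{1..cstar}. \<rho> c) + (\<rho> (cstar+1) + 1) * (1 - (\<Sum>c\<in>{M..cstar}. \<rho> c / (1 + \<rho> c)))"
proof -
  define r where "r = \<rho> (cstar+1)"
  define pM where "pM = \<rho> M"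
  define \<alpha> where "\<alpha> = pM * (1 + r) / (1 + pM)"
  define \<beta> where "\<beta> = 1 + r - \<alpha>"
  define h where "h c = (if c < M then \<rho> c - \<alpha> else if c \<le> cstar then \<rho> c - (1 + r) * (\<rho> c / (1 + \<rho> c)) else 0)" for c
  have r0: "r \<ge> 0" using pos cN unfolding r_def by auto
  have rpM: "r \<le> pM" using mono M1 Mc cN unfolding r_def pM_def by auto
  have pM0: "pM \<ge> 0" using pos M1 Mc cN unfolding pM_def by auto
  have \<alpha>r: "\<alpha> \<ge> r" unfolding \<alpha>_def using rpM pM0 r0 by (simp add: field_simps)
  have \<alpha>0: "\<alpha> \<ge> 0" using \<alpha>r r0 by simp
  have \<beta>0: "\<beta> \<ge> 0" unfolding \<beta>_def \<alpha>_def using pM0 r0 by (simp add: field_simps)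
  have \<alpha>hot: "\<alpha> * (1 + p) \<le> p * (1 + r)" if "p \<ge> pM" for p
  proof -
    have a: "pM * (1 + p) \<le> p * (1 + pM)" using that by (simp add: algebra_simps)
    have "pM * (1 + p) * (1 + r) \<le> p * (1 + pM) * (1 + r)" using mult_right_mono[OF a] r0 by simp
    hence "pM * (1 + r) * (1 + p) \<le> p * (1 + r) * (1 + pM)" by (simp add: algebra_simps)
    thus ?thesis unfolding \<alpha>_def using pM0 by (simp add: field_simps)
  qed
  have \<alpha>warm: "\<alpha> * (1 + p) \<ge> p * (1 + r)" if "p \<le> pM" "p \<ge> 0" for p
  proof -
    have a: "pM * (1 + p) \<ge> p * (1 + pM)" using that by (simp add: algebra_simps)
    have "pM * (1 + p) * (1 + r) \<ge> p * (1 + pM) * (1 + r)" using mult_right_mono[OF a] r0 by simp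
    hence "pM * (1 + r) * (1 + p) \<ge> p * (1 + r) * (1 + pM)" by (simp add: algebra_simps)
    thus ?thesis unfolding \<alpha>_def using pM0 by (simp add: field_simps)
  qed
  have each: "\<rho> c * f c + t c \<le> \<alpha> * f c + \<beta> * t c + h c" if c: "c \<in> {1..N}" for c
  proof -
    have F: "0 \<le> f c" "f c \<le> 1" "0 \<le> t c" "t c \<le> f c" "t c \<le> \<rho> c * (1 - f c)" using ft c by auto
    consider "c < M" | "M \<le> c" "c \<le> cstar" | "cstar < c" by linarith
    thus ?thesis
    proof cases
      case 1
      have "\<rho> c \<ge> pM" using mono c 1 Mc cN unfolding pM_def by auto
      thus ?thesis using lp_hot[OF F(1,2,3,5) \<alpha>r \<alpha>hot] 1 unfolding h_def \<beta>_def by simp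
    next
      case 2
      have "\<rho> c \<le> pM" "\<rho> c \<ge> r" using mono c 2 cN M1 unfolding pM_def r_def by auto
      thus ?thesis using lp_warm[OF F(1,2,3,5,4) \<alpha>r _ _ \<alpha>warm] 2 pos c unfolding h_def \<beta>_def by simp
    next
      case 3
      have "\<rho> c \<le> r" using mono c 3 M1 Mc cN unfolding r_def by auto
      thus ?thesis using lp_cold[OF F(1,4) \<alpha>r] 3 Mc unfolding h_def \<beta>_def by simp
    qed
  qed
  have "(\<Sum>c\<in>{1..N}. \<rho> c * f c + t c) \<le> (\<Sum>c\<in>{1..N}. \<alpha> * f c + \<beta> * t c + h c)"
    using each by (rule sum_mono)
  also have "\<dots> = \<alpha> * (\<Sum>c\<in>{1..N}. f c) + \<beta> * (\<Sum>c\<in>{1..N}. t c) + (\<Sum>c\<in>{1..N}. h c)"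
    by (simp add: sum.distrib sum_distrib_left)
  also have "\<dots> \<le> \<alpha> * M + \<beta> * 1 + (\<Sum>c\<in>{1..N}. h c)"
    using mult_left_mono[OF sf \<alpha>0] mult_left_mono[OF st \<beta>0] by simp
  also have "(\<Sum>c\<in>{1..N}. h c) = (\<Sum>c\<in>{1..<M}. \<rho> c - \<alpha>) + (\<Sum>c\<in>{M..cstar}. \<rho> c - (1 + r) * (\<rho> c / (1 + \<rho> c)))"
  proof -
    have "(\<Sum>c\<in>{1..N}. h c) = (\<Sum>c\<in>{1..<M}. h c) + (\<Sum>c\<in>{M..cstar}. h c) + (\<Sum>c\<in>{Suc cstar..N}. h c)"
      by (rule split3[OF M1 Mc cN])
    moreover have "(\<Sum>c\<in>{1..<M}. h c) = (\<Sum>c\<in>{1..<M}. \<rho> c - \<alpha>)" by (rule sum.cong) (auto simp: h_def)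
    moreover have "(\<Sum>c\<in>{M..cstar}. h c) = (\<Sum>c\<in>{M..cstar}. \<rho> c - (1 + r) * (\<rho> c / (1 + \<rho> c)))"
      by (rule sum.cong) (auto simp: h_def)
    moreover have "(\<Sum>c\<in>{Suc cstar..N}. h c) = 0" using Mc by (intro sum.neutral) (auto simp: h_def)
    ultimately show ?thesis by simp
  qed
  also have "\<alpha> * M + \<beta> * 1 + ((\<Sum>c\<in>{1..<M}. \<rho> c - \<alpha>) + (\<Sum>c\<in>{M..cstar}. \<rho> c - (1 + r) * (\<rho> c / (1 + \<rho> c))))
     = (\<Sum>c\<in>{1..cstar}. \<rho> c) + (r + 1) * (1 - (\<Sum>c\<in>{M..cstar}. \<rho> c / (1 + \<rho> c)))"
  proof -
    have "(\<Sum>c\<in>{1..<M}. \<rho> c - \<alpha>) = (\<Sum>c\<in>{1..<M}. \<rho> c) - (M - 1) * \<alpha>"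
      using M1 by (simp add: sum_subtractf of_nat_diff)
    moreover have "(\<Sum>c\<in>{M..cstar}. \<rho> c - (1 + r) * (\<rho> c / (1 + \<rho> c))) =
        (\<Sum>c\<in>{M..cstar}. \<rho> c) - (1 + r) * (\<Sum>c\<in>{M..cstar}. \<rho> c / (1 + \<rho> c))"
      by (simp add: sum_subtractf sum_distrib_left)
    moreover have "(\<Sum>c\<in>{1..cstar}. \<rho> c) = (\<Sum>c\<in>{1..<M}. \<rho> c) + (\<Sum>c\<in>{M..cstar}. \<rho> c)"
    proof -
      have "{1..cstar} = {1..<M} \<union> {M..cstar}" using M1 Mc by auto
      thus ?thesis by (simp add: sum.union_disjoint ivl_disj_int)
    qed
    ultimately show ?thesis unfolding \<beta>_def using M1 by (simp add: algebra_simps of_nat_diff)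
  qed
  finally show ?thesis unfolding r_def by simp
qed


definition EN :: "nat \<Rightarrow> (nat \<Rightarrow> real) \<Rightarrow> real \<Rightarrow> nat \<Rightarrow> nat \<Rightarrow> (nat \<Rightarrow> nat set) \<Rightarrow> nat \<Rightarrow> real" where
  "EN N nuhat rho U B P c = (\<Sum>n\<in>states N B U P. weight N nuhat rho U B P n * real (n c)) /
      (\<Sum>n\<in>states N B U P. weight N nuhat rho U B P n)"

lemma frac_bounds: "0 \<le> frac B P c" "frac B P c \<le> 1"
proof -
  show "0 \<le> frac B P c" unfolding frac_def by simp
  show "frac B P c \<le> 1"
  proof (cases "B = 0")
    case False
    have "real (card {b \<in> {..<B}. c \<in> P b}) \<le> real B" using card_le_B[of B c P] by simp
    thus ?thesis unfolding frac_def using False by simp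
  qed (simp add: frac_def)
qed

lemma offered_nonneg:
  assumes "nuhat c \<ge> 0" "rho \<ge> 0"
  shows "offered nuhat rho U B P c \<ge> 0"
  unfolding offered_def using assms frac_bounds[of B P c] by simp

lemma accept_eq:
  assumes c: "c \<in> {1..N}" and nn: "\<forall>c\<in>{1..N}. offered nuhat rho U B P c \<ge> 0"
  shows "offered nuhat rho U B P c * accept_prob N nuhat rho U B P c = EN N nuhat rho U B P c"
    "0 \<le> accept_prob N nuhat rho U B P c" "accept_prob N nuhat rho U B P c \<le> 1"
proof -
  let ?S = "states N B U P" and ?w = "weight N nuhat rho U B P"
  let ?A = "{n \<in> ?S. n(c := Suc (n c)) \<in> ?S}"
  have Z: "(\<Sum>m\<in>?S. ?w m) > 0" by (rule sum_weight_pos[OF nn])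
  have acc: "accept_prob N nuhat rho U B P c = (\<Sum>n\<in>?A. ?w n) / (\<Sum>m\<in>?S. ?w m)"
    unfolding accept_prob_def stat_prob_def by (simp add: sum_divide_distrib)
  show "offered nuhat rho U B P c * accept_prob N nuhat rho U B P c = EN N nuhat rho U B P c"
    unfolding acc EN_def using little[OF c, where B=B and U=U and P=P and nuhat=nuhat and rho=rho] by simp
  have w0: "\<And>n. ?w n \<ge> 0" using weight_nonneg[OF nn] by blast
  show "0 \<le> accept_prob N nuhat rho U B P c" unfolding acc using Z w0 by (simp add: sum_nonneg)
  have "(\<Sum>n\<in>?A. ?w n) \<le> (\<Sum>m\<in>?S. ?w m)"
    using w0 finite_states by (intro sum_mono2) auto
  thus "accept_prob N nuhat rho U B P c \<le> 1" unfolding acc using Z by simp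
qed

lemma EN_bounds:
  assumes nn: "\<forall>c\<in>{1..N}. offered nuhat rho U B P c \<ge> 0"
  shows "0 \<le> EN N nuhat rho U B P c"
    "c \<in> {1..N} \<Longrightarrow> EN N nuhat rho U B P c \<le> real U * real (card {b \<in> {..<B}. c \<in> P b})"
    "(\<Sum>c\<in>{1..N}. EN N nuhat rho U B P c) \<le> real B * real U"
proof -
  let ?S = "states N B U P" and ?w = "weight N nuhat rho U B P"
  have Z: "(\<Sum>m\<in>?S. ?w m) > 0" by (rule sum_weight_pos[OF nn])
  have w0: "\<And>n. ?w n \<ge> 0" using weight_nonneg[OF nn] by blast
  show "0 \<le> EN N nuhat rho U B P c" unfolding EN_def using Z w0 by (simp add: sum_nonneg)
  show "EN N nuhat rho U B P c \<le> real U * real (card {b \<in> {..<B}. c \<in> P b})" if c: "c \<in> {1..N}"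
  proof -
    have "(\<Sum>n\<in>?S. ?w n * real (n c)) \<le> (\<Sum>n\<in>?S. ?w n * (real U * real (card {b \<in> {..<B}. c \<in> P b})))"
    proof (rule sum_mono)
      fix n assume "n \<in> ?S"
      hence "n c \<le> U * card {b \<in> {..<B}. c \<in> P b}" using feasible_le_card c unfolding states_def by blast
      hence "real (n c) \<le> real U * real (card {b \<in> {..<B}. c \<in> P b})"
        by (metis of_nat_le_iff of_nat_mult)
      thus "?w n * real (n c) \<le> ?w n * (real U * real (card {b \<in> {..<B}. c \<in> P b}))"
        using w0 by (intro mult_left_mono) auto
    qed
    thus ?thesis unfolding EN_def using Z by (simp add: divide_le_eq sum_distrib_right[symmetric] mult.commute)
  qed
  have "(\<Sum>c\<in>{1..N}. EN N nuhat rho U B P c) = (\<Sum>n\<in>?S. ?w n * real (\<Sum>c\<in>{1..N}. n c)) / (\<Sum>m\<in>?S. ?w m)"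
    unfolding EN_def by (simp add: sum_divide_distrib[symmetric] sum_distrib_left) (rule disjI2, rule sum.swap)
  also have "\<dots> \<le> (\<Sum>n\<in>?S. ?w n * (real B * real U)) / (\<Sum>m\<in>?S. ?w m)"
  proof (intro divide_right_mono sum_mono mult_left_mono)
    fix n assume "n \<in> ?S"
    hence "(\<Sum>c\<in>{1..N}. n c) \<le> B * U" using feasible_sum_le unfolding states_def by blast
    thus "real (\<Sum>c\<in>{1..N}. n c) \<le> real B * real U" by (metis of_nat_le_iff of_nat_mult)
  qed (use Z w0 in auto)
  also have "\<dots> = real B * real U" using Z by (simp add: sum_distrib_right[symmetric])
  finally show "(\<Sum>c\<in>{1..N}. EN N nuhat rho U B P c) \<le> real B * real U" .
qed


lemma absorbed_decomp:
  assumes "B > 0" "U > 0" and nn: "\<forall>c\<in>{1..N}. offered nuhat rho U B P c \<ge> 0"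
  shows "absorbed N nuhat rho U B P = (\<Sum>c\<in>{1..N}. rho * nuhat c * frac B P c + EN N nuhat rho U B P c / (real B * real U))"
  unfolding absorbed_def sum_divide_distrib
proof (rule sum.cong[OF refl])
  fix c assume c: "c \<in> {1..N}"
  show "(nuhat c * rho * real B * real U * frac B P c + offered nuhat rho U B P c * accept_prob N nuhat rho U B P c) / (real B * real U) =
        rho * nuhat c * frac B P c + EN N nuhat rho U B P c / (real B * real U)"
    using accept_eq(1)[OF c nn] assms(1,2) by (simp add: add_divide_distrib)
qed

lemma cnt: "finite A \<Longrightarrow> (\<Sum>b\<in>A. if Q b then 1 else 0::nat) = card {b \<in> A. Q b}"
  by (simp add: sum.inter_filter[symmetric])

lemma sum_frac_le:
  assumes "placement N M B P" "B > 0"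
  shows "(\<Sum>c\<in>{1..N}. frac B P c) \<le> M"
proof -
  have "(\<Sum>c\<in>{1..N}. card {b \<in> {..<B}. c \<in> P b}) = (\<Sum>c\<in>{1..N}. \<Sum>b<B. if c \<in> P b then 1 else 0)"
    by (rule sum.cong[OF refl]) (rule cnt[symmetric], simp)
  also have "\<dots> = (\<Sum>b<B. \<Sum>c\<in>{1..N}. if c \<in> P b then 1 else 0)" by (rule sum.swap)
  also have "\<dots> = (\<Sum>b<B. card (P b))"
  proof (rule sum.cong[OF refl])
    fix b assume "b \<in> {..<B}"
    hence "P b \<subseteq> {1..N}" using assms(1) unfolding placement_def by auto
    hence "{c \<in> {1..N}. c \<in> P b} = P b" by auto
    thus "(\<Sum>c\<in>{1..N}. if c \<in> P b then 1 else 0) = card (P b)"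
      using cnt[of "{1..N}" "\<lambda>c. c \<in> P b"] by simp
  qed
  also have "\<dots> \<le> (\<Sum>b<B. M)" using assms(1) unfolding placement_def by (intro sum_mono) auto
  also have "\<dots> = B * M" by simp
  finally have "(\<Sum>c\<in>{1..N}. card {b \<in> {..<B}. c \<in> P b}) \<le> B * M" .
  hence "real (\<Sum>c\<in>{1..N}. card {b \<in> {..<B}. c \<in> P b}) \<le> real (B * M)"
    by (simp only: of_nat_le_iff)
  hence "(\<Sum>c\<in>{1..N}. real (card {b \<in> {..<B}. c \<in> P b})) \<le> real B * real M"
    by (simp only: of_nat_sum of_nat_mult)
  moreover have "(\<Sum>c\<in>{1..N}. frac B P c) = (\<Sum>c\<in>{1..N}. real (card {b \<in> {..<B}. c \<in> P b})) / real B"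
    unfolding frac_def by (simp add: sum_divide_distrib)
  ultimately show ?thesis using assms(2) by (simp add: divide_le_eq mult.commute)
qed

lemma M_le_cstar:
  fixes N M cstar :: nat and nuhat :: "nat \<Rightarrow> real" and rho :: real
  assumes "M \<ge> 1" "rho > 0" "\<forall>c\<in>{1..N}. nuhat c \<ge> 0"
    and "(\<Sum>c\<in>{M..cstar}. rho * nuhat c / (1 + rho * nuhat c)) \<le> 1"
    and "1 < (\<Sum>c\<in>{M..cstar+1}. rho * nuhat c / (1 + rho * nuhat c))"
    and "cstar + 1 \<le> N"
  shows "M \<le> cstar"
proof (rule ccontr)
  assume "\<not> M \<le> cstar"
  hence "{M..cstar+1} = {} \<or> {M..cstar+1} = {M}" by auto
  moreover have "rho * nuhat M / (1 + rho * nuhat M) < 1"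
  proof -
    have "nuhat M \<ge> 0" using assms \<open>\<not> M \<le> cstar\<close> by auto
    hence "rho * nuhat M \<ge> 0" using assms by simp
    thus ?thesis by simp
  qed
  ultimately show False using assms(5) by auto
qed

lemma part2_B:
  fixes N M U cstar :: nat and nuhat :: "nat \<Rightarrow> real" and rho :: real
  assumes M1: "M \<ge> 1" and U0: "U > 0" and r0: "rho > 0"
    and nu0: "\<forall>c\<in>{1..N}. nuhat c \<ge> 0"
    and mono: "\<forall>c c'. 1 \<le> c \<and> c \<le> c' \<and> c' \<le> N \<longrightarrow> nuhat c' \<le> nuhat c"
    and h7: "(\<Sum>c\<in>{M..cstar}. rho * nuhat c / (1 + rho * nuhat c)) \<le> 1"
    and h8: "1 < (\<Sum>c\<in>{M..cstar+1}. rho * nuhat c / (1 + rho * nuhat c))"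
    and cN: "cstar + 1 \<le> N"
    and pl: "placement N M B P" and B0: "B > 0"
  shows "absorbed N nuhat rho U B P \<le> rho_tilde M nuhat rho cstar"
proof -
  have Mc: "M \<le> cstar" by (rule M_le_cstar[OF M1 r0 nu0 h7 h8 cN])
  have nn: "\<forall>c\<in>{1..N}. offered nuhat rho U B P c \<ge> 0"
    using nu0 r0 offered_nonneg by (meson less_imp_le)
  let ?t = "\<lambda>c. EN N nuhat rho U B P c / (real B * real U)"
  have BU: "real B * real U > 0" using B0 U0 by simp
  have "(\<Sum>c\<in>{1..N}. rho * nuhat c * frac B P c + ?t c) \<le> rho_tilde M nuhat rho cstar"
    unfolding rho_tilde_def
  proof (rule lp_bound[OF M1 Mc cN])
    show "\<forall>c\<in>{1..N}. rho * nuhat c \<ge> 0" using nu0 r0 by simp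
    show "\<forall>c c'. 1 \<le> c \<and> c \<le> c' \<and> c' \<le> N \<longrightarrow> rho * nuhat c' \<le> rho * nuhat c"
      using mono r0 by (simp add: mult_left_mono)
    show "(\<Sum>c\<in>{1..N}. frac B P c) \<le> real M" by (rule sum_frac_le[OF pl B0])
    show "(\<Sum>c\<in>{1..N}. ?t c) \<le> 1"
      using EN_bounds(3)[OF nn] BU by (simp add: sum_divide_distrib[symmetric])
    show "\<forall>c\<in>{1..N}. 0 \<le> frac B P c \<and> frac B P c \<le> 1 \<and> 0 \<le> ?t c \<and> ?t c \<le> frac B P c \<and>
       ?t c \<le> rho * nuhat c * (1 - frac B P c)"
    proof
      fix c assume c: "c \<in> {1..N}"
      have e0: "0 \<le> EN N nuhat rho U B P c" by (rule EN_bounds(1)[OF nn])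
      have e1: "EN N nuhat rho U B P c \<le> real U * real (card {b \<in> {..<B}. c \<in> P b})"
        by (rule EN_bounds(2)[OF nn c])
      have fr: "frac B P c * real B = real (card {b \<in> {..<B}. c \<in> P b})" unfolding frac_def using B0 by simp
      have e2: "EN N nuhat rho U B P c \<le> offered nuhat rho U B P c"
        using accept_eq[OF c nn] nn c
        by (metis mult.right_neutral mult_left_mono)
      show "0 \<le> frac B P c \<and> frac B P c \<le> 1 \<and> 0 \<le> ?t c \<and> ?t c \<le> frac B P c \<and>
       ?t c \<le> rho * nuhat c * (1 - frac B P c)"
      proof (intro conjI)
        show "0 \<le> frac B P c" "frac B P c \<le> 1" by (rule frac_bounds)+
        show "0 \<le> ?t c" using e0 BU by simp
        have "EN N nuhat rho U B P c \<le> real U * (frac B P c * real B)" using e1 unfolding fr .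
        thus "?t c \<le> frac B P c" using BU by (simp add: divide_le_eq algebra_simps)
        show "?t c \<le> rho * nuhat c * (1 - frac B P c)"
        proof -
          have "EN N nuhat rho U B P c \<le> (rho * nuhat c * (1 - frac B P c)) * (real B * real U)"
            using e2 unfolding offered_def by (simp add: algebra_simps)
          thus ?thesis using BU by (simp add: divide_le_eq)
        qed
      qed
    qed
  qed
  thus ?thesis using absorbed_decomp[OF B0 U0 nn] by simp
qed


definition tk :: "real \<Rightarrow> nat \<Rightarrow> real" where "tk a k = a ^ k / fact k"
definition emean :: "real \<Rightarrow> nat \<Rightarrow> real" where
  "emean a C = (\<Sum>k\<le>C. real k * tk a k) / (\<Sum>k\<le>C. tk a k)"
definition eblock :: "real \<Rightarrow> nat \<Rightarrow> real" where
  "eblock a C = tk a C / (\<Sum>k\<le>C. tk a k)"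

lemma tk_nonneg: "a \<ge> 0 \<Longrightarrow> tk a k \<ge> 0" unfolding tk_def by simp
lemma tk0: "tk a 0 = 1" unfolding tk_def by simp

lemma tk_sum_pos: "a \<ge> 0 \<Longrightarrow> (\<Sum>k\<le>C. tk a k) > 0"
proof -
  assume a: "a \<ge> 0"
  have "(\<Sum>k\<le>C. tk a k) \<ge> tk a 0" using tk_nonneg[OF a] by (intro member_le_sum) auto
  thus ?thesis using tk0 by simp
qed

lemma sum_k_tk: "(\<Sum>k\<le>C. real k * tk a k) = a * (\<Sum>k<C. tk a k)"
proof (induction C)
  case 0 show ?case by simp
next
  case (Suc C)
  have "real (Suc C) * tk a (Suc C) = a * tk a C" unfolding tk_def
    by (simp add: field_simps del: of_nat_Suc)
  with Suc show ?case by (simp add: algebra_simps)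
qed

lemma emean_eq: "a \<ge> 0 \<Longrightarrow> emean a C = a * (1 - eblock a C)"
proof -
  assume a: "a \<ge> 0"
  have Z: "(\<Sum>k\<le>C. tk a k) > 0" by (rule tk_sum_pos[OF a])
  have "(\<Sum>k\<le>C. tk a k) = (\<Sum>k<C. tk a k) + tk a C"
    by (simp add: lessThan_Suc_atMost[symmetric])
  thus ?thesis unfolding emean_def eblock_def sum_k_tk using Z by (simp add: field_simps)
qed

lemma emean_bounds: "a \<ge> 0 \<Longrightarrow> 0 \<le> emean a C \<and> emean a C \<le> real C"
proof -
  assume a: "a \<ge> 0"
  have Z: "(\<Sum>k\<le>C. tk a k) > 0" by (rule tk_sum_pos[OF a])
  have "(\<Sum>k\<le>C. real k * tk a k) \<le> (\<Sum>k\<le>C. real C * tk a k)"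
    using tk_nonneg[OF a] by (intro sum_mono mult_right_mono) auto
  hence "(\<Sum>k\<le>C. real k * tk a k) \<le> real C * (\<Sum>k\<le>C. tk a k)" by (simp add: sum_distrib_left)
  moreover have "(\<Sum>k\<le>C. real k * tk a k) \<ge> 0" using tk_nonneg[OF a] by (intro sum_nonneg) auto
  ultimately show ?thesis unfolding emean_def using Z by (simp add: divide_le_eq)
qed

lemma emean_mono:
  assumes a: "0 < a" and aa: "a \<le> a'"
  shows "emean a C \<le> emean a' C"
proof -
  define D where "D = emean a C"
  define s where "s = a' / a"
  have s1: "s \<ge> 1" unfolding s_def using a aa by simp
  have a'0: "a' \<ge> 0" using a aa by simp
  have Z: "(\<Sum>k\<le>C. tk a k) > 0" by (rule tk_sum_pos) (use a in simp)
  have Z': "(\<Sum>k\<le>C. tk a' k) > 0" by (rule tk_sum_pos[OF a'0])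
  have zero: "(\<Sum>k\<le>C. tk a k * (real k - D)) = 0"
  proof -
    have "(\<Sum>k\<le>C. tk a k * (real k - D)) = (\<Sum>k\<le>C. real k * tk a k) - D * (\<Sum>k\<le>C. tk a k)"
      by (simp add: algebra_simps sum_subtractf sum_distrib_left)
    moreover have "D * (\<Sum>k\<le>C. tk a k) = (\<Sum>k\<le>C. real k * tk a k)"
      unfolding D_def emean_def using Z by simp
    ultimately show ?thesis by simp
  qed
  have tks: "tk a' k = tk a k * s ^ k" for k
    unfolding tk_def s_def using a by (simp add: power_divide)
  have trm: "tk a k * (real k - D) * s ^ k \<ge> tk a k * (real k - D) * s powr D" for k
  proof -
    have sk: "s ^ k = s powr real k" using s1 by (simp add: powr_realpow)
    have "(real k - D) * (s powr real k - s powr D) \<ge> 0"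
    proof (cases "real k \<ge> D")
      case True thus ?thesis using powr_mono[OF True s1] by simp
    next
      case False
      hence "real k \<le> D" by simp
      thus ?thesis using powr_mono[OF _ s1, of "real k" D] False by (simp add: mult_nonpos_nonpos)
    qed
    hence "tk a k * ((real k - D) * (s powr real k - s powr D)) \<ge> 0"
      using tk_nonneg[of a k] a by simp
    thus ?thesis unfolding sk by (simp add: algebra_simps)
  qed
  have "(\<Sum>k\<le>C. tk a' k * (real k - D)) = (\<Sum>k\<le>C. tk a k * (real k - D) * s ^ k)"
    by (simp add: tks algebra_simps)
  also have "\<dots> \<ge> (\<Sum>k\<le>C. tk a k * (real k - D) * s powr D)" by (rule sum_mono[OF trm])
  also have "(\<Sum>k\<le>C. tk a k * (real k - D) * s powr D) = 0"
    using zero by (simp add: sum_distrib_right[symmetric])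
  finally have "(\<Sum>k\<le>C. tk a' k * (real k - D)) \<ge> 0" .
  hence "(\<Sum>k\<le>C. real k * tk a' k) - D * (\<Sum>k\<le>C. tk a' k) \<ge> 0"
    by (simp add: algebra_simps sum_subtractf sum_distrib_left)
  thus ?thesis unfolding D_def[symmetric] emean_def[of a' C] using Z' by (simp add: le_divide_eq)
qed

lemma fact_ge_pow: "fact (m + j) \<ge> (fact m * real (m+1) ^ j :: real)"
proof (induction j)
  case 0 show ?case by simp
next
  case (Suc j)
  have "fact (m + Suc j) = real (m + Suc j) * (fact (m + j) :: real)" by simp
  also have "\<dots> \<ge> real (m+1) * (fact m * real (m+1) ^ j)"
    using Suc by (intro mult_mono) auto
  finally show ?case by (simp add: algebra_simps)
qed

lemma eblock_bound:
  assumes a: "a > 0"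
  shows "eblock a (m + j) \<le> (a / real (m+1)) ^ j"
proof -
  have Z: "(\<Sum>k\<le>m+j. tk a k) \<ge> tk a m"
    using tk_nonneg[of a] a by (intro member_le_sum) auto
  have tm: "tk a m > 0" unfolding tk_def using a by simp
  have "eblock a (m + j) \<le> tk a (m + j) / tk a m"
    unfolding eblock_def using Z tm tk_nonneg[of a "m+j"] a by (intro divide_left_mono) auto
  also have "tk a (m + j) / tk a m = a ^ j * (fact m / fact (m+j))"
    unfolding tk_def using a by (simp add: field_simps power_add)
  also have "\<dots> \<le> a ^ j * (1 / real (m+1) ^ j)"
  proof (intro mult_left_mono)
    have "fact m * real (m+1) ^ j \<le> (fact (m+j) :: real)" by (rule fact_ge_pow)
    thus "fact m / fact (m + j) \<le> 1 / real (m + 1) ^ j"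
      by (simp add: field_simps)
  qed (use a in simp)
  also have "\<dots> = (a / real (m+1)) ^ j" by (simp add: power_divide)
  finally show ?thesis .
qed


lemma eblock_theta:
  assumes t0: "0 < \<theta>" and t1: "\<theta> < 1" and C: "C > 0"
  shows "eblock (\<theta> * real C) C \<le> (2 * \<theta> / (1 + \<theta>)) ^ nat \<lfloor>(1 - \<theta>) / 2 * real C\<rfloor>"
proof -
  define j where "j = nat \<lfloor>(1 - \<theta>) / 2 * real C\<rfloor>"
  have x0: "(1 - \<theta>) / 2 * real C \<ge> 0" using t1 by simp
  have jle: "real j \<le> (1 - \<theta>) / 2 * real C" unfolding j_def
  proof -
    have "real (nat \<lfloor>(1 - \<theta>) / 2 * real C\<rfloor>) = real_of_int \<lfloor>(1 - \<theta>) / 2 * real C\<rfloor>"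
      using x0 by (simp add: of_nat_nat)
    also have "\<dots> \<le> (1 - \<theta>) / 2 * real C" by (rule of_int_floor_le)
    finally show "real (nat \<lfloor>(1 - \<theta>) / 2 * real C\<rfloor>) \<le> (1 - \<theta>) / 2 * real C" .
  qed
  have "(1 - \<theta>) / 2 * real C \<le> 1 * real C" using t0 by (intro mult_right_mono) auto
  hence "real j \<le> real C" using jle by linarith
  hence jC: "j \<le> C" by simp
  define m where "m = C - j"
  have Cmj: "C = m + j" unfolding m_def using jC by simp
  have m1: "real (m + 1) \<ge> (1 + \<theta>) / 2 * real C"
  proof -
    have "real (m + 1) = real C - real j + 1" unfolding m_def using jC by (simp add: of_nat_diff)
    moreover have "(1 + \<theta>) / 2 * real C = real C - (1 - \<theta>) / 2 * real C" by (simp add: field_simps)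
    ultimately show ?thesis using jle by linarith
  qed
  have a0: "\<theta> * real C > 0" using t0 C by simp
  have "eblock (\<theta> * real C) C \<le> (\<theta> * real C / real (m+1)) ^ j"
    using eblock_bound[OF a0, of m j] Cmj by simp
  also have "\<dots> \<le> (2 * \<theta> / (1 + \<theta>)) ^ j"
  proof (rule power_mono)
    show "0 \<le> \<theta> * real C / real (m + 1)" using a0 by simp
    have pos: "(1 + \<theta>) / 2 * real C > 0" using t0 C by simp
    have "\<theta> * real C / real (m + 1) \<le> \<theta> * real C / ((1 + \<theta>) / 2 * real C)"
      using m1 pos a0 by (intro divide_left_mono) auto
    also have "\<dots> = 2 * \<theta> / (1 + \<theta>)"
    proof -
      have "real C \<noteq> 0" using C by auto
      hence "\<theta> * real C / ((1 + \<theta>) / 2 * real C) = \<theta> / ((1 + \<theta>) / 2)"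
        by (rule nonzero_mult_divide_mult_cancel_right)
      also have "\<dots> = 2 * \<theta> / (1 + \<theta>)" by simp
      finally show ?thesis .
    qed
    finally show "\<theta> * real C / real (m + 1) \<le> 2 * \<theta> / (1 + \<theta>)" .
  qed
  finally show ?thesis unfolding j_def .
qed

lemma erlang_limit:
  fixes a s :: "nat \<Rightarrow> real" and C :: "nat \<Rightarrow> nat" and x y :: real
  assumes a0: "\<And>B. a B \<ge> 0" and ax: "(\<lambda>B. a B / s B) \<longlonglongrightarrow> x"
    and Cy: "(\<lambda>B. real (C B) / s B) \<longlonglongrightarrow> y"
    and yx: "y \<le> x" and sinf: "filterlim s at_top sequentially"
  shows "(\<lambda>B. emean (a B) (C B) / s B) \<longlonglongrightarrow> y"
proof -
  have spos: "eventually (\<lambda>B. s B > 0) sequentially"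
    using sinf by (simp add: filterlim_at_top_dense)
  have eb: "0 \<le> emean (a B) (C B) \<and> emean (a B) (C B) \<le> real (C B)" for B
    using emean_bounds[OF a0] .
  have low0: "eventually (\<lambda>B. 0 \<le> emean (a B) (C B) / s B) sequentially"
    using spos by eventually_elim (use eb in simp)
  have up: "eventually (\<lambda>B. emean (a B) (C B) / s B \<le> real (C B) / s B) sequentially"
    using spos by eventually_elim (use eb in \<open>simp add: divide_right_mono\<close>)
  show ?thesis
  proof (rule order_tendstoI)
    fix u assume "u > y"
    from order_tendstoD(2)[OF Cy this] up
    show "eventually (\<lambda>B. emean (a B) (C B) / s B < u) sequentially"
      by eventually_elim simp
  next
    fix l assume ly: "l < y"
    show "eventually (\<lambda>B. l < emean (a B) (C B) / s B) sequentially"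
    proof (cases "l < 0")
      case True
      from low0 show ?thesis by eventually_elim (use True in simp)
    next
      case False
      hence l0: "0 \<le> l" by simp
      have y0: "y > 0" using l0 ly by simp
      define \<theta> where "\<theta> = (l / y + 1) / 2"
      have "l / y \<ge> 0" using l0 y0 by simp
      hence t0: "0 < \<theta>" unfolding \<theta>_def by simp
      have ly1: "l / y < 1" using ly y0 by simp
      have t1: "\<theta> < 1" unfolding \<theta>_def using ly1 by simp
      have ty: "\<theta> * y = (l + y) / 2" unfolding \<theta>_def using y0 by (simp add: field_simps)
      define q where "q = 2 * \<theta> / (1 + \<theta>)"
      define \<delta> where "\<delta> = (1 - \<theta>) / 2"
      have q0: "0 \<le> q" and q1: "q < 1" unfolding q_def using t0 t1 by auto
      have d0: "\<delta> > 0" unfolding \<delta>_def using t1 by simp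
      have Cinf: "filterlim (\<lambda>B. real (C B)) at_top sequentially"
      proof -
        have "filterlim (\<lambda>B. real (C B) / s B * s B) at_top sequentially"
          by (rule filterlim_tendsto_pos_mult_at_top[OF Cy y0 sinf])
        moreover have "eventually (\<lambda>B. real (C B) / s B * s B = real (C B)) sequentially"
          using spos by eventually_elim simp
        ultimately show ?thesis using filterlim_cong by fastforce
      qed
      have jinf: "filterlim (\<lambda>B. nat \<lfloor>\<delta> * real (C B)\<rfloor>) at_top sequentially"
      proof -
        have "filterlim (\<lambda>B. \<delta> * real (C B)) at_top sequentially"
          using filterlim_tendsto_pos_mult_at_top[OF tendsto_const d0 Cinf] .
        hence "filterlim (\<lambda>B. \<lfloor>\<delta> * real (C B)\<rfloor>) at_top sequentially"
          by (rule filterlim_compose[OF filterlim_floor_sequentially])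
        hence "filterlim (\<lambda>B. nat \<lfloor>\<delta> * real (C B)\<rfloor>) sequentially sequentially"
          by (rule filterlim_compose[OF filterlim_nat_sequentially])
        thus ?thesis by simp
      qed
      have qj: "(\<lambda>B. q ^ nat \<lfloor>\<delta> * real (C B)\<rfloor>) \<longlonglongrightarrow> 0"
        by (rule tendsto_power_zero[OF jinf]) (use q0 q1 in simp)
      define g where "g B = \<theta> * (real (C B) / s B) * (1 - q ^ nat \<lfloor>\<delta> * real (C B)\<rfloor>)" for B
      have glim: "g \<longlonglongrightarrow> \<theta> * y * (1 - 0)"
        unfolding g_def by (intro tendsto_intros Cy qj)
      have "l < \<theta> * y * (1 - 0)" using ly ty by simp
      from order_tendstoD(1)[OF glim this]
      have gl: "eventually (\<lambda>B. l < g B) sequentially" .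
      have aC: "eventually (\<lambda>B. \<theta> * (real (C B) / s B) < a B / s B) sequentially"
      proof -
        have "(\<lambda>B. a B / s B - \<theta> * (real (C B) / s B)) \<longlonglongrightarrow> x - \<theta> * y"
          by (intro tendsto_intros ax Cy)
        moreover have "x - \<theta> * y > 0" using yx ty ly by simp
        ultimately have "eventually (\<lambda>B. a B / s B - \<theta> * (real (C B) / s B) > 0) sequentially"
          by (rule order_tendstoD(1))
        thus ?thesis by eventually_elim simp
      qed
      have Cpos: "eventually (\<lambda>B. real (C B) > 0) sequentially"
        using Cinf unfolding filterlim_at_top_dense by (metis of_nat_0_less_iff)
      have ge: "eventually (\<lambda>B. g B \<le> emean (a B) (C B) / s B) sequentially"
        using spos aC Cpos
      proof eventually_elim
        case (elim B)
        have sB: "s B > 0" and CB: "C B > 0" using elim by auto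
        have "\<theta> * real (C B) < a B" using elim(2) sB by (simp add: divide_less_cancel mult.commute[of \<theta>] divide_simps)
        hence mono: "emean (\<theta> * real (C B)) (C B) \<le> emean (a B) (C B)"
          using t0 CB by (intro emean_mono) auto
        have blk: "eblock (\<theta> * real (C B)) (C B) \<le> q ^ nat \<lfloor>\<delta> * real (C B)\<rfloor>"
          using eblock_theta[OF t0 t1 CB] unfolding q_def \<delta>_def by simp
        have "\<theta> * real (C B) * (1 - q ^ nat \<lfloor>\<delta> * real (C B)\<rfloor>) \<le> \<theta> * real (C B) * (1 - eblock (\<theta> * real (C B)) (C B))"
          using blk t0 by (intro mult_left_mono) auto
        also have "\<dots> = emean (\<theta> * real (C B)) (C B)" using t0 by (simp add: emean_eq)
        also have "\<dots> \<le> emean (a B) (C B)" by (rule mono)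
        finally have "\<theta> * real (C B) * (1 - q ^ nat \<lfloor>\<delta> * real (C B)\<rfloor>) \<le> emean (a B) (C B)" .
        hence "\<theta> * real (C B) * (1 - q ^ nat \<lfloor>\<delta> * real (C B)\<rfloor>) / s B \<le> emean (a B) (C B) / s B"
          using sB by (intro divide_right_mono) auto
        moreover have "g B = \<theta> * real (C B) * (1 - q ^ nat \<lfloor>\<delta> * real (C B)\<rfloor>) / s B"
          unfolding g_def by simp
        ultimately show ?case by simp
      qed
      from gl ge show ?thesis by eventually_elim simp
    qed
  qed
qed


lemma distribute:
  fixes U :: nat
  assumes "finite K" "n \<le> U * card K"
  shows "\<exists>y. (\<forall>b. y b \<le> U) \<and> (\<forall>b. b \<notin> K \<longrightarrow> y b = 0) \<and> sum y K = n"
  using assms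
proof (induction K arbitrary: n rule: finite_induct)
  case empty thus ?case by (intro exI[of _ "\<lambda>_. 0"]) simp
next
  case (insert b K)
  define k where "k = min n U"
  have "n - k \<le> U * card K" using insert.prems insert.hyps unfolding k_def by (auto simp: algebra_simps)
  then obtain y where y: "\<forall>b. y b \<le> U" "\<forall>b. b \<notin> K \<longrightarrow> y b = 0" "sum y K = n - k"
    using insert.IH by blast
  define y' where "y' = y(b := k)"
  have "sum y' K = sum y K" unfolding y'_def using insert.hyps by (intro sum.cong) auto
  hence "sum y' (insert b K) = k + (n - k)" using insert.hyps y(3) unfolding y'_def by simp
  also have "\<dots> = n" unfolding k_def by simp
  finally have s: "sum y' (insert b K) = n" .
  have "\<forall>b'. y' b' \<le> U" unfolding y'_def k_def using y by auto
  moreover have "\<forall>b'. b' \<notin> insert b K \<longrightarrow> y' b' = 0" unfolding y'_def using y by auto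
  ultimately show ?case using s by blast
qed

lemma hwc_feasible_iff:
  fixes N B U :: nat and P :: "nat \<Rightarrow> nat set" and H W :: "nat set" and w :: "nat \<Rightarrow> nat"
  assumes Pw: "\<forall>b<B. w b \<in> W \<and> P b = H \<union> {w b}" and HW: "H \<inter> W = {}" and HWN: "H \<union> W \<subseteq> {1..N}"
    and nH: "\<forall>h\<in>H. n h = 0"
  shows "n \<in> states N B U P \<longleftrightarrow> (\<forall>c. c \<notin> W \<longrightarrow> n c = 0) \<and> (\<forall>c\<in>W. n c \<le> U * card {b \<in> {..<B}. c \<in> P b})"
proof
  assume n: "n \<in> states N B U P"
  hence f: "feasible N B U P n" unfolding states_def by simp
  show "(\<forall>c. c \<notin> W \<longrightarrow> n c = 0) \<and> (\<forall>c\<in>W. n c \<le> U * card {b \<in> {..<B}. c \<in> P b})"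
  proof (intro conjI allI impI ballI)
    fix c assume c: "c \<notin> W"
    show "n c = 0"
    proof (cases "c \<in> {1..N}")
      case False thus ?thesis using feasible_zero_out[OF f] by blast
    next
      case True
      show ?thesis
      proof (cases "c \<in> H")
        case True thus ?thesis using nH by blast
      next
        case False
        have "{b \<in> {..<B}. c \<in> P b} = {}" using Pw c False by auto
        hence e: "card {b \<in> {..<B}. c \<in> P b} = 0" by (simp only: card.empty)
        show ?thesis using feasible_le_card[OF f True] unfolding e by simp
      qed
    qed
  next
    fix c assume "c \<in> W"
    hence "c \<in> {1..N}" using HWN by auto
    thus "n c \<le> U * card {b \<in> {..<B}. c \<in> P b}" by (rule feasible_le_card[OF f])
  qed
next
  assume r: "(\<forall>c. c \<notin> W \<longrightarrow> n c = 0) \<and> (\<forall>c\<in>W. n c \<le> U * card {b \<in> {..<B}. c \<in> P b})"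
  define K where "K c = {b \<in> {..<B}. c \<in> P b}" for c
  have "\<forall>c\<in>W. \<exists>y. (\<forall>b. y b \<le> U) \<and> (\<forall>b. b \<notin> K c \<longrightarrow> y b = 0) \<and> sum y (K c) = n c"
  proof
    fix c assume c: "c \<in> W"
    have fK: "finite (K c)" unfolding K_def by simp
    have "n c \<le> U * card (K c)" using r c unfolding K_def by blast
    from distribute[OF fK this] show "\<exists>y. (\<forall>b. y b \<le> U) \<and> (\<forall>b. b \<notin> K c \<longrightarrow> y b = 0) \<and> sum y (K c) = n c" .
  qed
  from bchoice[OF this] obtain Y where Y: "\<forall>c\<in>W. (\<forall>b. Y c b \<le> U) \<and> (\<forall>b. b \<notin> K c \<longrightarrow> Y c b = 0) \<and> sum (Y c) (K c) = n c"
    by blast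
  define x where "x c b = (if c \<in> W then Y c b else 0)" for c b
  show "n \<in> states N B U P" unfolding states_def feasible_def
  proof (intro CollectI conjI exI[of _ x])
    show "\<forall>c. c \<notin> {1..N} \<longrightarrow> n c = 0" using r HWN by auto
    show "\<forall>c b. 0 < x c b \<longrightarrow> c \<in> {1..N} \<and> b < B \<and> c \<in> P b"
    proof (intro allI impI)
      fix c b assume "0 < x c b"
      hence cW: "c \<in> W" unfolding x_def by (auto split: if_splits)
      have "b \<in> K c"
      proof (rule ccontr)
        assume "b \<notin> K c"
        hence "x c b = 0" using Y cW unfolding x_def by simp
        thus False using \<open>0 < x c b\<close> by simp
      qed
      note cW this
      thus "c \<in> {1..N} \<and> b < B \<and> c \<in> P b" using HWN unfolding K_def by auto
    qed
    show "\<forall>c\<in>{1..N}. (\<Sum>b<B. x c b) = n c"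
    proof
      fix c assume c: "c \<in> {1..N}"
      show "(\<Sum>b<B. x c b) = n c"
      proof (cases "c \<in> W")
        case True
        have "(\<Sum>b<B. x c b) = (\<Sum>b<B. Y c b)" unfolding x_def using True by simp
        also have "\<dots> = (\<Sum>b\<in>K c. Y c b)"
          using True Y by (intro sum.mono_neutral_right) (auto simp: K_def)
        finally have "(\<Sum>b<B. x c b) = (\<Sum>b\<in>K c. Y c b)" .
        thus ?thesis using True Y by simp
      next
        case False thus ?thesis using r unfolding x_def by simp
      qed
    qed
    show "\<forall>b<B. (\<Sum>c\<in>{1..N}. x c b) \<le> U"
    proof (intro allI impI)
      fix b assume b: "b < B"
      have "(\<Sum>c\<in>{1..N}. x c b) = (\<Sum>c\<in>{1..N}. if c = w b then x c b else 0)"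
      proof (rule sum.cong[OF refl])
        fix c assume "c \<in> {1..N}"
        show "x c b = (if c = w b then x c b else 0)"
        proof (cases "c = w b")
          case False
          show ?thesis
          proof (cases "c \<in> W")
            case True
            have "b \<notin> K c" unfolding K_def using Pw b False True HW by auto
            thus ?thesis using Y True False unfolding x_def by simp
          qed (simp add: x_def False)
        qed simp
      qed
      also have "\<dots> \<le> U"
        using Y Pw b by (simp add: x_def)
      finally show "(\<Sum>c\<in>{1..N}. x c b) \<le> U" .
    qed
  qed
qed

lemma factor_sum:
  fixes T :: "(nat \<Rightarrow> nat) set" and c C :: nat and g \<phi> :: "nat \<Rightarrow> real" and w :: "(nat \<Rightarrow> nat) \<Rightarrow> real"
  assumes T1: "\<forall>n\<in>T. n c \<le> C \<and> n(c:=0) \<in> T"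
    and T2: "\<forall>r\<in>T. r c = 0 \<longrightarrow> (\<forall>k\<le>C. r(c:=k) \<in> T)"
    and Wf: "\<forall>n. w n = g (n c) * w (n(c:=0))"
  shows "(\<Sum>n\<in>T. w n * \<phi> (n c)) = (\<Sum>k\<le>C. \<phi> k * g k) * (\<Sum>r\<in>{r\<in>T. r c = 0}. w r)"
proof -
  let ?R = "{r\<in>T. r c = 0}"
  let ?h = "\<lambda>(k, r). r(c := k)"
  have bij: "bij_betw ?h ({..C} \<times> ?R) T"
  proof (rule bij_betw_byWitness[where f' = "\<lambda>n. (n c, n(c:=0))"])
    show "\<forall>a\<in>{..C} \<times> ?R. (\<lambda>n. (n c, n(c := 0))) (?h a) = a" by auto
    show "\<forall>a'\<in>T. ?h (a' c, a'(c := 0)) = a'" by auto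
    show "?h ` ({..C} \<times> ?R) \<subseteq> T" using T2 by auto
    show "(\<lambda>n. (n c, n(c := 0))) ` T \<subseteq> {..C} \<times> ?R" using T1 by auto
  qed
  have "(\<Sum>n\<in>T. w n * \<phi> (n c)) = (\<Sum>p\<in>{..C} \<times> ?R. w (?h p) * \<phi> ((?h p) c))"
    by (rule sum.reindex_bij_betw[OF bij, symmetric])
  also have "\<dots> = (\<Sum>p\<in>{..C} \<times> ?R. (\<phi> (fst p) * g (fst p)) * w (snd p))"
  proof (rule sum.cong[OF refl])
    fix p assume "p \<in> {..C} \<times> ?R"
    then obtain k r where p: "p = (k, r)" "r c = 0" by auto
    have "r(c := k, c := 0) = r" using p(2) by auto
    hence "w (r(c := k)) = g k * w r" using Wf[rule_format, of "r(c:=k)"] by simp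
    thus "w (?h p) * \<phi> ((?h p) c) = (\<phi> (fst p) * g (fst p)) * w (snd p)" using p by simp
  qed
  also have "\<dots> = (\<Sum>k\<le>C. \<Sum>r\<in>?R. (\<phi> k * g k) * w r)"
    by (simp add: sum.cartesian_product split_def)
  also have "\<dots> = (\<Sum>k\<le>C. \<phi> k * g k) * (\<Sum>r\<in>?R. w r)"
    by (simp add: sum_product)
  finally show ?thesis .
qed

lemma EN_warm:
  fixes N B U :: nat and P :: "nat \<Rightarrow> nat set" and H W :: "nat set" and w :: "nat \<Rightarrow> nat"
    and nuhat :: "nat \<Rightarrow> real" and rho :: real
  assumes Pw: "\<forall>b<B. w b \<in> W \<and> P b = H \<union> {w b}" and HW: "H \<inter> W = {}" and HWN: "H \<union> W \<subseteq> {1..N}"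
    and cW: "c \<in> W"
    and nn: "\<forall>c\<in>{1..N}. offered nuhat rho U B P c \<ge> 0"
    and hot0: "\<forall>h\<in>H. offered nuhat rho U B P h = 0"
  shows "EN N nuhat rho U B P c = emean (offered nuhat rho U B P c) (U * card {b \<in> {..<B}. c \<in> P b})"
proof -
  let ?S = "states N B U P" and ?w = "weight N nuhat rho U B P"
  let ?S' = "{n \<in> ?S. \<forall>h\<in>H. n h = 0}"
  let ?C = "U * card {b \<in> {..<B}. c \<in> P b}"
  let ?a = "offered nuhat rho U B P c"
  have cN: "c \<in> {1..N}" using cW HWN by auto
  have cH: "c \<notin> H" using cW HW by auto
  have w0: "\<And>n. ?w n \<ge> 0" using weight_nonneg[OF nn] by blast
  have wz: "?w n = 0" if "n \<notin> ?S'" "n \<in> ?S" for n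
  proof -
    have "\<exists>h\<in>H. n h \<noteq> 0" using that by blast
    then obtain h where h: "h \<in> H" "n h \<noteq> 0" by blast
    have hN: "h \<in> {1..N}" using h HWN by auto
    show ?thesis using weight_split[OF hN, of nuhat rho U B P n] hot0 h by simp
  qed
  have red: "(\<Sum>n\<in>?S. ?w n * \<phi> n) = (\<Sum>n\<in>?S'. ?w n * \<phi> n)" for \<phi> :: "(nat \<Rightarrow> nat) \<Rightarrow> real"
    by (rule sum.mono_neutral_right) (use finite_states wz in auto)
  have iff: "n \<in> ?S' \<longleftrightarrow> (\<forall>h\<in>H. n h = 0) \<and> (\<forall>c. c \<notin> W \<longrightarrow> n c = 0) \<and> (\<forall>c\<in>W. n c \<le> U * card {b \<in> {..<B}. c \<in> P b})" for n
    using hwc_feasible_iff[OF Pw HW HWN, of n U] by blast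
  have T1: "\<forall>n\<in>?S'. n c \<le> ?C \<and> n(c:=0) \<in> ?S'"
  proof
    fix n assume n: "n \<in> ?S'"
    hence A: "(\<forall>h\<in>H. n h = 0) \<and> (\<forall>c. c \<notin> W \<longrightarrow> n c = 0) \<and> (\<forall>c\<in>W. n c \<le> U * card {b \<in> {..<B}. c \<in> P b})"
      using iff by blast
    hence "n(c:=0) \<in> ?S'" unfolding iff by auto
    thus "n c \<le> ?C \<and> n(c:=0) \<in> ?S'" using A cW by blast
  qed
  have T2: "\<forall>r\<in>?S'. r c = 0 \<longrightarrow> (\<forall>k\<le>?C. r(c:=k) \<in> ?S')"
  proof (intro ballI impI allI)
    fix r k assume r: "r \<in> ?S'" "r c = 0" and k: "k \<le> ?C"
    hence A: "(\<forall>h\<in>H. r h = 0) \<and> (\<forall>c. c \<notin> W \<longrightarrow> r c = 0) \<and> (\<forall>c\<in>W. r c \<le> U * card {b \<in> {..<B}. c \<in> P b})"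
      using iff by blast
    show "r(c:=k) \<in> ?S'" unfolding iff using A k cW cH by auto
  qed
  have Wf: "\<forall>n. ?w n = tk ?a (n c) * ?w (n(c:=0))"
    using weight_split[OF cN] unfolding tk_def by blast
  let ?R = "{r \<in> ?S'. r c = 0}"
  have R0: "(\<Sum>r\<in>?R. ?w r) > 0"
  proof -
    have z: "(\<lambda>_. 0) \<in> ?R" using zero_state by auto
    have fR: "finite ?R" using finite_states by auto
    have "(\<Sum>r\<in>?R. ?w r) \<ge> ?w (\<lambda>_. 0)" using w0 fR z by (intro member_le_sum) auto
    thus ?thesis using weight_zero by simp
  qed
  have num: "(\<Sum>n\<in>?S. ?w n * real (n c)) = (\<Sum>k\<le>?C. real k * tk ?a k) * (\<Sum>r\<in>?R. ?w r)"
    using red[of "\<lambda>n. real (n c)"] factor_sum[OF T1 T2 Wf, of real] by simp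
  have den: "(\<Sum>n\<in>?S. ?w n) = (\<Sum>k\<le>?C. tk ?a k) * (\<Sum>r\<in>?R. ?w r)"
    using red[of "\<lambda>n. 1"] factor_sum[OF T1 T2 Wf, of "\<lambda>_. 1"] by simp
  show ?thesis unfolding EN_def emean_def num den using R0 by simp
qed


lemma part1:
  fixes N M U cstar :: nat and nuhat :: "nat \<Rightarrow> real" and rho :: real
  assumes M1: "M \<ge> 1" and U0: "U > 0" and r0: "rho > 0"
    and nu0: "\<forall>c\<in>{1..N}. nuhat c \<ge> 0"
    and h7: "(\<Sum>c\<in>{M..cstar}. rho * nuhat c / (1 + rho * nuhat c)) \<le> 1"
    and h8: "1 < (\<Sum>c\<in>{M..cstar+1}. rho * nuhat c / (1 + rho * nuhat c))"
    and cN: "cstar + 1 \<le> N"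
    and hs: "hwc_seq N M nuhat rho cstar P"
  shows "(\<lambda>B. absorbed N nuhat rho U B (P B)) \<longlonglongrightarrow> rho_tilde M nuhat rho cstar"
proof -
  have Mc: "M \<le> cstar" by (rule M_le_cstar[OF M1 r0 nu0 h7 h8 cN])
  define H where "H = {1..M-1}"
  define W where "W = {M..cstar+1}"
  define m where "m c = hwc_frac M nuhat rho cstar c" for c
  define \<rho> where "\<rho> c = rho * nuhat c" for c
  have HW: "H \<inter> W = {}" unfolding H_def W_def by auto
  have HWN: "H \<union> W \<subseteq> {1..N}" unfolding H_def W_def using M1 Mc cN by auto
  have Hiff: "c \<in> H \<longleftrightarrow> 1 \<le> c \<and> c < M" for c unfolding H_def using M1 by auto
  have ex: "\<forall>B. \<forall>b<B. \<exists>w\<in>W. P B b = H \<union> {w}" using hs unfolding hwc_seq_def H_def W_def by blast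
  define wf where "wf B b = (SOME w. w \<in> W \<and> P B b = H \<union> {w})" for B b
  have Pw: "\<forall>b<B. wf B b \<in> W \<and> P B b = H \<union> {wf B b}" for B
  proof (intro allI impI)
    fix b assume "b < B"
    then obtain w where "w \<in> W \<and> P B b = H \<union> {w}" using ex by blast
    thus "wf B b \<in> W \<and> P B b = H \<union> {wf B b}" unfolding wf_def by (rule someI)
  qed
  have fracl: "\<forall>c\<in>W. (\<lambda>B. frac B (P B) c) \<longlonglongrightarrow> m c" using hs unfolding hwc_seq_def W_def m_def by blast
  have nn: "\<forall>c\<in>{1..N}. offered nuhat rho U B (P B) c \<ge> 0" for B
    using nu0 r0 offered_nonneg by (meson less_imp_le)
  have frac_hot: "frac B (P B) h = 1" if "B > 0" "h \<in> H" for B h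
  proof -
    have "{b \<in> {..<B}. h \<in> P B b} = {..<B}" using Pw[of B] that(2) by auto
    thus ?thesis unfolding frac_def using that(1) by simp
  qed
  have card_cold: "card {b \<in> {..<B}. c \<in> P B b} = 0" if "c \<notin> H" "c \<notin> W" for B c
  proof -
    have "{b \<in> {..<B}. c \<in> P B b} = {}" using Pw[of B] that by auto
    thus ?thesis by (simp only: card.empty)
  qed
  have off_hot: "offered nuhat rho U B (P B) h = 0" if "B > 0" "h \<in> H" for B h
    unfolding offered_def using frac_hot[OF that] by simp
  define seq where "seq c B = \<rho> c * frac B (P B) c + EN N nuhat rho U B (P B) c / (real B * real U)" for c B
  have abs_eq: "absorbed N nuhat rho U B (P B) = (\<Sum>c\<in>{1..N}. seq c B)" if "B > 0" for B
    unfolding seq_def \<rho>_def using absorbed_decomp[OF that U0 nn] by simp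
  define L where "L c = (if c < M then \<rho> c else if c \<le> cstar + 1 then \<rho> c * m c + m c else 0)" for c
  have lim: "(\<lambda>B. seq c B) \<longlonglongrightarrow> L c" if c: "c \<in> {1..N}" for c
  proof -
    consider "c \<in> H" | "c \<in> W" | "c \<notin> H" "c \<notin> W" by blast
    thus ?thesis
    proof cases
      case 1
      have "eventually (\<lambda>B. \<rho> c = seq c B) sequentially"
      proof (rule eventually_sequentiallyI[of 1])
        fix B :: nat assume "1 \<le> B"
        hence B0: "B > 0" by simp
        have "EN N nuhat rho U B (P B) c = 0"
          using accept_eq(1)[OF c nn[of B]] off_hot[OF B0 1] by simp
        thus "\<rho> c = seq c B" unfolding seq_def using frac_hot[OF B0 1] by simp
      qed
      moreover have "L c = \<rho> c" unfolding L_def using 1 Hiff by simp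
      ultimately show ?thesis using Lim_transform_eventually[OF tendsto_const] by metis
    next
      case 3
      have "eventually (\<lambda>B. 0 = seq c B) sequentially"
      proof (rule eventually_sequentiallyI[of 1])
        fix B :: nat assume "1 \<le> B"
        have "EN N nuhat rho U B (P B) c \<le> 0"
          using EN_bounds(2)[OF nn[of B] c] unfolding card_cold[OF 3] by simp
        hence "EN N nuhat rho U B (P B) c = 0" using EN_bounds(1)[OF nn[of B]] by (meson order.antisym)
        thus "0 = seq c B" unfolding seq_def frac_def card_cold[OF 3] by simp
      qed
      moreover have "L c = 0" unfolding L_def using 3 c Hiff unfolding W_def by auto
      ultimately show ?thesis using Lim_transform_eventually[OF tendsto_const] by metis
    next
      case 2
      have cle: "M \<le> c" "c \<le> cstar + 1" using 2 unfolding W_def by auto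
      have \<rho>0: "\<rho> c \<ge> 0" unfolding \<rho>_def using nu0 c r0 by simp
      have Lc: "L c = \<rho> c * m c + m c" unfolding L_def using cle by simp
      have xy: "m c \<le> \<rho> c * (1 - m c)"
      proof (cases "c \<le> cstar")
        case True
        hence "m c = \<rho> c / (1 + \<rho> c)" unfolding m_def hwc_frac_def \<rho>_def by simp
        thus ?thesis using \<rho>0 by (simp add: field_simps)
      next
        case False
        hence cc: "c = Suc cstar" using cle by simp
        have mc: "m c = 1 - (\<Sum>d\<in>{M..cstar}. \<rho> d / (1 + \<rho> d))"
          unfolding m_def hwc_frac_def \<rho>_def using False by simp
        have "1 < (\<Sum>d\<in>{M..cstar}. \<rho> d / (1 + \<rho> d)) + \<rho> c / (1 + \<rho> c)"
          using h8 Mc cc unfolding \<rho>_def by simp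
        hence "m c < \<rho> c / (1 + \<rho> c)" using mc by simp
        hence "m c * (1 + \<rho> c) < \<rho> c" using \<rho>0 by (simp add: field_simps)
        thus ?thesis by (simp add: algebra_simps)
      qed
      define s where "s B = real B * real U" for B
      have sinf: "filterlim s at_top sequentially"
        unfolding s_def using U0
        by (intro filterlim_at_top_mult_tendsto_pos[OF tendsto_const _ filterlim_real_sequentially]) simp
      have ev: "eventually (\<lambda>B. B > 0) sequentially" by (rule eventually_gt_at_top)
      have fl: "(\<lambda>B. frac B (P B) c) \<longlonglongrightarrow> m c" using fracl 2 by blast
      have a_lim: "(\<lambda>B. offered nuhat rho U B (P B) c / s B) \<longlonglongrightarrow> \<rho> c * (1 - m c)"
      proof -
        have "(\<lambda>B. \<rho> c * (1 - frac B (P B) c)) \<longlonglongrightarrow> \<rho> c * (1 - m c)"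
          by (intro tendsto_intros fl)
        moreover have "eventually (\<lambda>B. \<rho> c * (1 - frac B (P B) c) = offered nuhat rho U B (P B) c / s B) sequentially"
          using ev by eventually_elim (use U0 in \<open>simp add: offered_def s_def \<rho>_def\<close>)
        ultimately show ?thesis by (rule Lim_transform_eventually)
      qed
      have C_lim: "(\<lambda>B. real (U * card {b \<in> {..<B}. c \<in> P B b}) / s B) \<longlonglongrightarrow> m c"
      proof -
        have "eventually (\<lambda>B. frac B (P B) c = real (U * card {b \<in> {..<B}. c \<in> P B b}) / s B) sequentially"
          using ev by eventually_elim (use U0 in \<open>simp add: frac_def s_def\<close>)
        with fl show ?thesis by (rule Lim_transform_eventually)
      qed
      have e_lim: "(\<lambda>B. emean (offered nuhat rho U B (P B) c) (U * card {b \<in> {..<B}. c \<in> P B b}) / s B) \<longlonglongrightarrow> m c"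
        by (rule erlang_limit[OF _ a_lim C_lim xy sinf]) (use nn c in blast)
      have "(\<lambda>B. \<rho> c * frac B (P B) c + emean (offered nuhat rho U B (P B) c) (U * card {b \<in> {..<B}. c \<in> P B b}) / s B)
          \<longlonglongrightarrow> \<rho> c * m c + m c"
        by (intro tendsto_intros fl e_lim)
      moreover have "eventually (\<lambda>B. \<rho> c * frac B (P B) c + emean (offered nuhat rho U B (P B) c) (U * card {b \<in> {..<B}. c \<in> P B b}) / s B
          = seq c B) sequentially"
        using ev
      proof eventually_elim
        case (elim B)
        have "EN N nuhat rho U B (P B) c = emean (offered nuhat rho U B (P B) c) (U * card {b \<in> {..<B}. c \<in> P B b})"
          by (rule EN_warm[OF Pw HW HWN 2 nn]) (use off_hot elim in blast)
        thus ?case unfolding seq_def s_def by simp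
      qed
      ultimately show ?thesis unfolding Lc by (rule Lim_transform_eventually)
    qed
  qed
  have "(\<lambda>B. \<Sum>c\<in>{1..N}. seq c B) \<longlonglongrightarrow> (\<Sum>c\<in>{1..N}. L c)"
    by (rule tendsto_sum) (rule lim)
  moreover have "eventually (\<lambda>B. (\<Sum>c\<in>{1..N}. seq c B) = absorbed N nuhat rho U B (P B)) sequentially"
    using eventually_gt_at_top[of 0] by eventually_elim (simp add: abs_eq)
  ultimately have conv: "(\<lambda>B. absorbed N nuhat rho U B (P B)) \<longlonglongrightarrow> (\<Sum>c\<in>{1..N}. L c)"
    by (rule Lim_transform_eventually)
  have "(\<Sum>c\<in>{1..N}. L c) = rho_tilde M nuhat rho cstar"
  proof -
    have "(\<Sum>c\<in>{1..N}. L c) = (\<Sum>c\<in>{1..<M}. L c) + (\<Sum>c\<in>{M..cstar}. L c) + (\<Sum>c\<in>{Suc cstar..N}. L c)"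
      by (rule split3[OF M1 Mc cN])
    moreover have "(\<Sum>c\<in>{1..<M}. L c) = (\<Sum>c\<in>{1..<M}. \<rho> c)" by (rule sum.cong) (auto simp: L_def)
    moreover have "(\<Sum>c\<in>{M..cstar}. L c) = (\<Sum>c\<in>{M..cstar}. \<rho> c)"
    proof (rule sum.cong[OF refl])
      fix c assume c: "c \<in> {M..cstar}"
      have \<rho>0: "\<rho> c \<ge> 0" unfolding \<rho>_def using nu0 c r0 M1 cN by auto
      have "m c = \<rho> c / (1 + \<rho> c)" unfolding m_def hwc_frac_def \<rho>_def using c by simp
      hence "\<rho> c * m c + m c = \<rho> c" using \<rho>0 by (simp add: field_simps)
      thus "L c = \<rho> c" unfolding L_def using c by simp
    qed
    moreover have "(\<Sum>c\<in>{Suc cstar..N}. L c) = L (Suc cstar)"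
    proof -
      have "(\<Sum>c\<in>{Suc cstar..N}. L c) = L (Suc cstar) + (\<Sum>c\<in>{Suc (Suc cstar)..N}. L c)"
        using cN by (simp add: sum.atLeast_Suc_atMost)
      moreover have "(\<Sum>c\<in>{Suc (Suc cstar)..N}. L c) = 0" using Mc by (intro sum.neutral) (auto simp: L_def)
      ultimately show ?thesis by simp
    qed
    moreover have "L (Suc cstar) = (\<rho> (cstar+1) + 1) * (1 - (\<Sum>c\<in>{M..cstar}. \<rho> c / (1 + \<rho> c)))"
      unfolding L_def m_def hwc_frac_def \<rho>_def using Mc by (simp add: algebra_simps)
    moreover have "(\<Sum>c\<in>{1..cstar}. \<rho> c) = (\<Sum>c\<in>{1..<M}. \<rho> c) + (\<Sum>c\<in>{M..cstar}. \<rho> c)"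
    proof -
      have "{1..cstar} = {1..<M} \<union> {M..cstar}" using M1 Mc by auto
      thus ?thesis by (simp add: sum.union_disjoint ivl_disj_int)
    qed
    ultimately show ?thesis unfolding rho_tilde_def \<rho>_def by simp
  qed
  with conv show ?thesis by simp
qed


theorem mainTheorem3:
  fixes N M U cstar :: nat and nuhat :: "nat \<Rightarrow> real" and rho :: real
  assumes "M \<ge> 1" and "U > 0" and "rho > 0"
    and "\<forall>c\<in>{1..N}. nuhat c \<ge> 0"
    and "(\<Sum>c\<in>{1..N}. nuhat c) = 1"
    and "\<forall>c c'. 1 \<le> c \<and> c \<le> c' \<and> c' \<le> N \<longrightarrow> nuhat c' \<le> nuhat c"
    and "(\<Sum>c\<in>{M..cstar}. rho * nuhat c / (1 + rho * nuhat c)) \<le> 1"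
    and "1 < (\<Sum>c\<in>{M..cstar+1}. rho * nuhat c / (1 + rho * nuhat c))"
    and "cstar + 1 \<le> N"
  shows "(\<forall>P. hwc_seq N M nuhat rho cstar P \<longrightarrow>
            (\<lambda>B. absorbed N nuhat rho U B (P B)) \<longlonglongrightarrow> rho_tilde M nuhat rho cstar)
       \<and> (\<forall>P. (\<forall>B. placement N M B (P B)) \<longrightarrow>
            limsup (\<lambda>B. ereal (absorbed N nuhat rho U B (P B))) \<le> ereal (rho_tilde M nuhat rho cstar))"
proof (intro conjI allI impI)
  fix P assume "hwc_seq N M nuhat rho cstar P"
  thus "(\<lambda>B. absorbed N nuhat rho U B (P B)) \<longlonglongrightarrow> rho_tilde M nuhat rho cstar"
    using part1[OF assms(1,2,3,4,7,8,9)] by blast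
next
  fix P :: "nat \<Rightarrow> nat \<Rightarrow> nat set" assume pl: "\<forall>B. placement N M B (P B)"
  have "eventually (\<lambda>B. ereal (absorbed N nuhat rho U B (P B)) \<le> ereal (rho_tilde M nuhat rho cstar)) sequentially"
    using eventually_gt_at_top[of 0]
  proof eventually_elim
    case (elim B)
    show ?case using part2_B[OF assms(1,2,3,4,6,7,8,9) pl[rule_format, of B] elim] by simp
  qed
  thus "limsup (\<lambda>B. ereal (absorbed N nuhat rho U B (P B))) \<le> ereal (rho_tilde M nuhat rho cstar)"
    by (rule Limsup_bounded)
qed

end
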